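(* Let $2\le j<k$ be integers and consider the election $E(j,k)$ with committees $W=D_{k-2}\cup\{x,a\}$ and $W'=D_{k-2}\cup\{y,b\}$. Then $\Delta(W,a,b)=\delta(j,k)$ and $\Delta(W',b,a)=\delta(j,k)$, where $\delta(j,k)=\frac{j!}{\prod_{j'=0}^{j}(k-j')}>0$; in particular both swaps strictly increase the PAV score.
   Context: An approval election is a tuple $(N,C,(A_v)_{v\in N},k)$ with voters $N$, candidates $C$, ballots $A_v\subseteq C$ and target committee size $k$. The PAV score of $W\subseteq C$ is $\textsc{pavsc}(W)=\sum_{v\in N}\sum_{i=1}^{|A_v\cap W|}\frac1i$, and $\Delta(W,a,b)=\textsc{pavsc}((W\setminus\{a\})\cup\{b\})-\textsc{pavsc}(W)$. Let $D_\ell=\{d_1,\dots,d_\ell\}$ denote a set of dummy candidates ($D_0=\varnothing$, $D_\ell\subseteq D_{\ell+1}$). Elections $F(j,k)$, for $1\le j<k$, with candidate set $D_{k-1}\cup\{a,b\}$ and committee size $k$, are defined recursively. $F(1,k)$ has two voters with ballots $D_{k-1}\cup\{a\}$ and $D_{k-2}\cup\{b\}$. For $j>1$, take a copy of $F(j-1,k)$ with candidates $D_{k-1}\cup\{a_1,b_1\}$ and a copy of $F(j-1,k-1)$ with candidates $D_{k-2}\cup\{a_2,b_2\}$, with disjoint voter sets; in every ballot of the first copy replace $a_1$ by $b$ and $b_1$ by $a$, in every ballot of the second copy replace $a_2$ by $a$ and $b_2$ by $b$; $F(j,k)$ has the union of the two voter sets with these ballots, candidates $D_{k-1}\cup\{a,b\}$,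 and committee size $k$. The election $E(j,k)$ (for $2\le j<k$) is defined as follows: take two copies of $F(j-1,k-1)$ with disjoint voter sets $N_1,N_2$ and candidates $D_{k-2}\cup\{a_1,b_1\}$ and $D_{k-2}\cup\{a_2,b_2\}$ respectively; in ballots of voters in $N_1$ replace $a_1$ by $b$ and $b_1$ by $a$ and add a new candidate $x$; in ballots of voters in $N_2$ replace $a_2$ by $a$ and $b_2$ by $b$ and add a new candidate $y$. $E(j,k)$ has voters $N_1\cup N_2$, candidates $D_{k-2}\cup\{x,y,a,b\}$ and committee size $k$. *)

theory Defs
  imports Main Complex_Main
begin

datatype cand = Dum nat | CA | CB | CX | CY

definition dummies :: "nat \<Rightarrow> cand set" where
  "dummies l = Dum ` {1..l}"

(* An approval election: the voters are represented by the list of their ballots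
   (one entry per voter, repetitions allowed), together with the candidate set
   and the target committee size. *)
record election =
  ballots :: "cand set list"
  cands :: "cand set"
  csize :: nat

definition pavsc :: "election \<Rightarrow> cand set \<Rightarrow> real" where
  "pavsc E W = (\<Sum>A\<leftarrow>ballots E. \<Sum>i=1..card (A \<inter> W). 1 / real i)"

definition Delta :: "election \<Rightarrow> cand set \<Rightarrow> cand \<Rightarrow> cand \<Rightarrow> real" where
  "Delta E W a b = pavsc E ((W - {a}) \<union> {b}) - pavsc E W"

fun swapAB :: "cand \<Rightarrow> cand" where
  "swapAB CA = CB"
| "swapAB CB = CA"
| "swapAB c = c"

(* ballots of F(j,k); only meaningful for 1 <= j < k *)
fun Fb :: "nat \<Rightarrow> nat \<Rightarrow> cand set list" where
  "Fb 0 k = []"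
| "Fb (Suc 0) k = [dummies (k - 1) \<union> {CA}, dummies (k - 2) \<union> {CB}]"
| "Fb (Suc (Suc j)) k =
     map (\<lambda>A. swapAB ` A) (Fb (Suc j) k) @ Fb (Suc j) (k - 1)"

definition F_el :: "nat \<Rightarrow> nat \<Rightarrow> election" where
  "F_el j k = \<lparr> ballots = Fb j k, cands = dummies (k - 1) \<union> {CA, CB}, csize = k \<rparr>"

definition E_el :: "nat \<Rightarrow> nat \<Rightarrow> election" where
  "E_el j k = \<lparr> ballots =
       map (\<lambda>A. swapAB ` A \<union> {CX}) (Fb (j - 1) (k - 1))
     @ map (\<lambda>A. A \<union> {CY}) (Fb (j - 1) (k - 1)),
     cands = dummies (k - 2) \<union> {CX, CY, CA, CB}, csize = k \<rparr>"

definition delta :: "nat \<Rightarrow> nat \<Rightarrow> real" where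
  "delta j k = fact j / (\<Prod>j'=0..j. (real k - real j'))"

end

theory Submission
  imports Defs
begin

definition HH :: "nat \<Rightarrow> real" where "HH n = (\<Sum>i=1..n. 1 / real i)"

lemma HH_Suc: "HH (Suc n) = HH n + 1 / real (Suc n)"
  unfolding HH_def by simp

definition dm :: "cand set \<Rightarrow> nat" where "dm A = card (A - {CA, CB})"
definition sg :: "cand set \<Rightarrow> real" where "sg A = (if CA \<in> A then 1 else -1)"
definition PP :: "cand set list \<Rightarrow> real" where
  "PP L = (\<Sum>A\<leftarrow>L. sg A / ((real (dm A) + 1) * (real (dm A) + 2)))"

lemma dummies_simps[simp]: "CA \<notin> dummies m" "CB \<notin> dummies m" "CX \<notin> dummies m" "CY \<notin> dummies m"
  "finite (dummies m)" "card (dummies m) = m"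
  unfolding dummies_def by (auto simp: card_image inj_on_def)

lemma dummies_mono2: "m \<le> n \<Longrightarrow> dummies n \<inter> dummies m = dummies m"
  unfolding dummies_def by auto

lemma dummies_mono: "m \<le> n \<Longrightarrow> dummies m \<inter> dummies n = dummies m"
  unfolding dummies_def by auto

lemma swap_dummies: "swapAB ` (dummies m \<union> {c}) = dummies m \<union> {swapAB c}"
  unfolding dummies_def by (auto simp: image_iff)

lemma swap_dummies0[simp]: "swapAB ` dummies m = dummies m"
proof -
  have "\<And>x. x \<in> dummies m \<Longrightarrow> swapAB x = x" unfolding dummies_def by auto
  then show ?thesis by force
qed

lemma Fb_form: "A \<in> set (Fb j k) \<Longrightarrow> \<exists>m c. A = dummies m \<union> {c} \<and> c \<in> {CA, CB} \<and> m \<le> k - 1"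
proof (induction j k arbitrary: A rule: Fb.induct)
  case (1 k) then show ?case by simp
next
  case (2 k)
  then have "A = dummies (k - 1) \<union> {CA} \<or> A = dummies (k - 2) \<union> {CB}" by auto
  then show ?case
  proof
    assume "A = dummies (k - 1) \<union> {CA}" then show ?thesis by blast
  next
    assume "A = dummies (k - 2) \<union> {CB}" then show ?thesis
      by (intro exI[of _ "k - 2"] exI[of _ CB]) auto
  qed
next
  case (3 j k)
  from "3.prems" consider (a) "A \<in> (\<lambda>A. swapAB ` A) ` set (Fb (Suc j) k)" | (b) "A \<in> set (Fb (Suc j) (k - 1))"
    by auto
  then show ?case
  proof cases
    case a
    then obtain B where B: "B \<in> set (Fb (Suc j) k)" "A = swapAB ` B" by auto
    from "3.IH"(1)[OF B(1)] obtain m c where "B = dummies m \<union> {c}" "c \<in> {CA, CB}" "m \<le> k - 1" by auto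
    then show ?thesis using B(2) by (intro exI[of _ m] exI[of _ "swapAB c"]) (auto simp: swap_dummies)
  next
    case b
    from "3.IH"(2)[OF b] obtain m c where "A = dummies m \<union> {c}" "c \<in> {CA, CB}" "m \<le> k - 1 - 1" by auto
    then show ?thesis by (intro exI[of _ m] exI[of _ c]) auto
  qed
qed

lemma dm_form[simp]: "c \<in> {CA, CB} \<Longrightarrow> dm (dummies m \<union> {c}) = m"
  unfolding dm_def by (auto simp: Un_Diff insert_Diff_if) 

lemma sg_form[simp]: "sg (insert CA (dummies m)) = 1" "sg (insert CB (dummies m)) = -1"
  unfolding sg_def by auto

lemma dm_form2[simp]: "dm (insert CA (dummies m)) = m" "dm (insert CB (dummies m)) = m"
  using dm_form[of CA m] dm_form[of CB m] by auto

lemma PP_append[simp]: "PP (L1 @ L2) = PP L1 + PP L2"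
  unfolding PP_def by simp

lemma PP_Cons: "PP (A # L) = PP [A] + PP L"
  unfolding PP_def by simp

lemma PP_single: "c \<in> {CA, CB} \<Longrightarrow> PP [swapAB ` (dummies m \<union> {c})] = - PP [dummies m \<union> {c}]"
  by (auto simp: PP_def)

lemma PP_swap: "\<forall>A\<in>set L. \<exists>m c. A = dummies m \<union> {c} \<and> c \<in> {CA, CB} \<Longrightarrow>
   PP (map (\<lambda>A. swapAB ` A) L) = - PP L"
proof (induction L)
  case Nil then show ?case by (simp add: PP_def)
next
  case (Cons A L)
  then obtain m c where A: "A = dummies m \<union> {c}" "c \<in> {CA, CB}" by auto
  have "PP (map (\<lambda>A. swapAB ` A) (A # L)) = PP [swapAB ` A] + PP (map (\<lambda>A. swapAB ` A) L)"
    by (subst list.map(2), subst PP_Cons, rule refl)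
  also have "PP [swapAB ` A] = - PP [A]" unfolding A(1) by (rule PP_single[OF A(2)])
  also have "PP (map (\<lambda>A. swapAB ` A) L) = - PP L" using Cons by simp
  finally show ?case using PP_Cons[of A L] by simp
qed

lemma PP_F: "1 \<le> j \<Longrightarrow> j < k \<Longrightarrow>
  PP (Fb j k) = - fact (j+1) / (\<Prod>i=0..j+1. (real k + 1 - real i))"
proof (induction j k rule: Fb.induct)
  case (1 k) then show ?case by simp
next
  case (2 k)
  then have k: "k \<ge> 2" by simp
  have e1: "real (k - 1) = real k - 1" and e2: "real (k - 2) = real k - 2" using k by auto
  have "PP (Fb (Suc 0) k) = 1 / ((real k) * (real k + 1)) - 1 / ((real k - 1) * real k)"
    using k by (simp add: PP_def e1 e2 algebra_simps)
  also have "\<dots> = - 2 / ((real k + 1) * real k * (real k - 1))"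
  proof -
    have "real k - 1 > 0" "real k > 0" "real k + 1 > 0" using k by auto
    then show ?thesis by (simp add: divide_simps)
  qed
  finally show ?case by (simp add: numeral_2_eq_2 algebra_simps)
next
  case (3 j k)
  have jk: "j + 2 < k" using "3.prems" by simp
  have form: "\<forall>A\<in>set (Fb (Suc j) k). \<exists>m c. A = dummies m \<union> {c} \<and> c \<in> {CA, CB}"
    using Fb_form by blast
  define Q where "Q = (\<Prod>i=0..j+1. (real k - real i))"
  have Qpos: "Q > 0" unfolding Q_def using jk by (intro prod_pos) auto
  have kk: "real (k - 1) = real k - 1" using jk by auto
  have p1: "(\<Prod>i=0..Suc j+1. (real k + 1 - real i)) = (real k + 1) * Q"
  proof -
    have e: "Suc j + 1 = Suc (j + 1)" by simp
    show ?thesis unfolding Q_def e prod.atLeast0_atMost_Suc_shift by (simp add: algebra_simps)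
  qed
  have p2: "(\<Prod>i=0..Suc j+1. (real (k - 1) + 1 - real i)) = Q * (real k - real j - 2)"
    unfolding Q_def kk by (simp add: algebra_simps)
  have p3: "(\<Prod>i=0..Suc (Suc j)+1. (real k + 1 - real i)) = (real k + 1) * Q * (real k - real j - 2)"
  proof -
    have e: "Suc (Suc j) + 1 = Suc (Suc (j + 1))" by simp
    have "(\<Prod>i=0..Suc (Suc (j + 1)). (real k + 1 - real i)) = (real k + 1) * (\<Prod>i=0..Suc (j + 1). (real k - real i))"
      by (subst prod.atLeast0_atMost_Suc_shift) (simp add: algebra_simps)
    also have "(\<Prod>i=0..Suc (j + 1). (real k - real i)) = Q * (real k - real j - 2)"
      unfolding Q_def by (subst prod.atLeast0_atMost_Suc) (simp add: algebra_simps)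
    finally show ?thesis unfolding e by (simp add: algebra_simps)
  qed
  have IH1: "PP (Fb (Suc j) k) = - fact (Suc j + 1) / ((real k + 1) * Q)"
    using "3.IH"(1) jk p1 by simp
  have IH2: "PP (Fb (Suc j) (k - 1)) = - fact (Suc j + 1) / (Q * (real k - real j - 2))"
    using "3.IH"(2) jk p2 by simp
  have d: "real k - real j - 2 > 0" using jk by simp
  define F where "F = (fact (Suc (Suc j)) :: real)"
  have F3: "(fact (Suc (Suc (Suc j))) :: real) = (real j + 3) * F"
    unfolding F_def by (simp only: fact_Suc[of "Suc (Suc j)"]) simp
  have "PP (Fb (Suc (Suc j)) k) = F / ((real k + 1) * Q) - F / (Q * (real k - real j - 2))"
    using IH1 IH2 PP_swap[OF form] unfolding F_def by simp
  also have "\<dots> = - ((real j + 3) * F) / ((real k + 1) * Q * (real k - real j - 2))"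
    using Qpos d by (simp add: divide_simps) (simp add: algebra_simps)
  finally have R: "PP (Fb (Suc (Suc j)) k) = - fact (Suc (Suc (Suc j))) / ((real k + 1) * Q * (real k - real j - 2))"
    unfolding F3 .
  show ?case unfolding p3 by (simp only: R Suc_eq_plus1[symmetric])
qed


definition g1 :: "cand set \<Rightarrow> cand set \<Rightarrow> cand set \<Rightarrow> real" where
  "g1 W W' A = HH (card ((swapAB ` A \<union> {CX}) \<inter> W')) - HH (card ((swapAB ` A \<union> {CX}) \<inter> W))
     + (HH (card ((A \<union> {CY}) \<inter> W')) - HH (card ((A \<union> {CY}) \<inter> W)))"

lemma ballot_a: "c \<in> {CA, CB} \<Longrightarrow> m \<le> n \<Longrightarrow>
  g1 (dummies n \<union> {CX, CA}) (dummies n \<union> {CX, CB}) (dummies m \<union> {c})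
  = - sg (dummies m \<union> {c}) / ((real (dm (dummies m \<union> {c})) + 1) * (real (dm (dummies m \<union> {c})) + 2))"
  by (auto simp: g1_def dummies_mono dummies_mono2 HH_Suc) (simp_all add: field_simps)

lemma ballot_b: "c \<in> {CA, CB} \<Longrightarrow> m \<le> n \<Longrightarrow>
  g1 (dummies n \<union> {CY, CB}) (dummies n \<union> {CY, CA}) (dummies m \<union> {c})
  = - sg (dummies m \<union> {c}) / ((real (dm (dummies m \<union> {c})) + 1) * (real (dm (dummies m \<union> {c})) + 2))"
  by (auto simp: g1_def dummies_mono dummies_mono2 HH_Suc) (simp_all add: field_simps)

lemma sum_combine: "(\<Sum>A\<leftarrow>L. a A) + (\<Sum>A\<leftarrow>L. b A) - ((\<Sum>A\<leftarrow>L. c A) + (\<Sum>A\<leftarrow>L. d A))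
   = (\<Sum>A\<leftarrow>L. a A - c A + (b A - d A :: real))"
  by (induction L) auto

lemma sum_list_neg: "(\<Sum>A\<leftarrow>L. - f A) = - (\<Sum>A\<leftarrow>L. f A :: real)"
  by (induction L) auto

lemma Delta_E: 
  assumes "2 \<le> j" "j < k" and WW: "W' = (W - {u}) \<union> {v}"
    and G: "\<And>A. A \<in> set (Fb (j - 1) (k - 1)) \<Longrightarrow> g1 W W' A = - sg A / ((real (dm A) + 1) * (real (dm A) + 2))"
  shows "Delta (E_el j k) W u v = delta j k"
proof -
  let ?L = "Fb (j - 1) (k - 1)"
  have pav: "pavsc (E_el j k) X = (\<Sum>A\<leftarrow>?L. HH (card ((swapAB ` A \<union> {CX}) \<inter> X))) + (\<Sum>A\<leftarrow>?L. HH (card ((A \<union> {CY}) \<inter> X)))" for X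
    by (simp add: pavsc_def HH_def E_el_def comp_def)
  have "Delta (E_el j k) W u v = (\<Sum>A\<leftarrow>?L. g1 W W' A)"
    unfolding Delta_def WW[symmetric] pav sum_combine g1_def ..
  also have "\<dots> = (\<Sum>A\<leftarrow>?L. - (sg A / ((real (dm A) + 1) * (real (dm A) + 2))))"
    by (rule arg_cong[where f = sum_list], rule map_cong) (simp_all add: G)
  also have "\<dots> = - PP ?L" unfolding PP_def by (simp add: sum_list_neg)
  also have "\<dots> = fact (j - 1 + 1) / (\<Prod>i=0..j - 1 + 1. (real (k - 1) + 1 - real i))"
    using PP_F[of "j - 1" "k - 1"] assms(1,2) by simp
  also have "\<dots> = delta j k" unfolding delta_def using assms(1,2) by (simp add: of_nat_diff)
  finally show ?thesis .
qed

theorem corollary6: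
  fixes j k :: nat
  assumes "2 \<le> j" and "j < k"
  shows "Delta (E_el j k) (dummies (k - 2) \<union> {CX, CA}) CA CB = delta j k
       \<and> Delta (E_el j k) (dummies (k - 2) \<union> {CY, CB}) CB CA = delta j k
       \<and> delta j k > 0"
proof (intro conjI)
  have F: "\<exists>m c. A = dummies m \<union> {c} \<and> c \<in> {CA, CB} \<and> m \<le> k - 2" if "A \<in> set (Fb (j - 1) (k - 1))" for A
    proof -
    have "k - 1 - 1 = k - 2" by simp
    then show ?thesis using Fb_form[OF that] by metis
  qed
  show "Delta (E_el j k) (dummies (k - 2) \<union> {CX, CA}) CA CB = delta j k"
  proof (rule Delta_E[OF assms])
    show "dummies (k - 2) \<union> {CX, CB} = (dummies (k - 2) \<union> {CX, CA} - {CA}) \<union> {CB}" by auto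
    fix A assume "A \<in> set (Fb (j - 1) (k - 1))"
    then obtain m c where "A = dummies m \<union> {c}" "c \<in> {CA, CB}" "m \<le> k - 2" using F by blast
    then show "g1 (dummies (k - 2) \<union> {CX, CA}) (dummies (k - 2) \<union> {CX, CB}) A = - sg A / ((real (dm A) + 1) * (real (dm A) + 2))"
      using ballot_a by blast
  qed
  show "Delta (E_el j k) (dummies (k - 2) \<union> {CY, CB}) CB CA = delta j k"
  proof (rule Delta_E[OF assms])
    show "dummies (k - 2) \<union> {CY, CA} = (dummies (k - 2) \<union> {CY, CB} - {CB}) \<union> {CA}" by auto
    fix A assume "A \<in> set (Fb (j - 1) (k - 1))"
    then obtain m c where "A = dummies m \<union> {c}" "c \<in> {CA, CB}" "m \<le> k - 2" using F by blast
    then show "g1 (dummies (k - 2) \<union> {CY, CB}) (dummies (k - 2) \<union> {CY, CA}) A = - sg A / ((real (dm A) + 1) * (real (dm A) + 2))"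
      using ballot_b by blast
  qed
  show "delta j k > 0"
    unfolding delta_def using assms by (intro divide_pos_pos prod_pos) auto
qed

end
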